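(* Let $\Omega\subset\mathbb{R}^d$ be a bounded Lipschitz domain whose local Lipschitz constants are bounded by a fixed $L>0$, let $0<\alpha\le1$, $\delta,M_1,M_2>0$, and let $y\in C^{1,\alpha}(\Omega;\mathbb{R}^d)$ satisfy $$\det\nabla y\ge\delta,\quad |\nabla y|\le M_1\ \text{ on }\Omega,\quad \|\nabla y\|_{C^\alpha(\Omega)}\le M_2.$$ Then there exists $\varrho>0$, depending only on $\delta,M_1,M_2,\alpha$ and $\Omega$, such that for every $\bar x\in\bar\Omega$, $y$ is injective on $\Omega(\bar x,\varrho):=B_\varrho(\bar x)\cap\Omega$ and $$\frac12\,\frac{\delta}{M_1^{d-1}}\,|x_1-x_2|\le|y(x_1)-y(x_2)|\le M_1\sqrt{1+L^2}\,|x_1-x_2|\quad\text{for all }x_1,x_2\in\Omega(\bar x,\varrho).$$ Moreover, the inverse $y^{-1}$ of the restriction of $y$ to $\Omega(\bar x,\varrho)$ is of class $C^{1,\alpha}$.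
   Context: "Local Lipschitz constants bounded by $L$" means: there is $R_0>0$ such that for every $x_0\in\partial\Omega$, in a cuboid containing $B_{R_0}(x_0)$, $\partial\Omega$ is the graph of a Lipschitz function with Lipschitz constant at most $L$ (with $\Omega$ on one side). Norms are Euclidean. *)

theory Defs
  imports "HOL-Analysis.Analysis"
begin

text \<open>Bounded Lipschitz domain whose local Lipschitz constants are bounded by L:
  there is R0 > 0 such that for every boundary point x0 there are an orthogonal change
  of coordinates Q, a distinguished coordinate k and a cuboid C (a box in the rotated
  coordinates centred-translated at x0) containing the ball B_R0(x0), and a function g
  of the remaining d-1 coordinates with Lipschitz constant at most L, such that inside
  C the set Omega is exactly the region below the graph of g (so the boundary in C is
  the graph of g).\<close>
definition lipschitz_domain_bound :: "(real^'n) set \<Rightarrow> real \<Rightarrow> bool" where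
  "lipschitz_domain_bound \<Omega> L \<longleftrightarrow>
     open \<Omega> \<and> connected \<Omega> \<and> bounded \<Omega> \<and> \<Omega> \<noteq> {} \<and>
     (\<exists>R0>0. \<forall>x0\<in>frontier \<Omega>.
        \<exists>(Q :: real^'n \<Rightarrow> real^'n) (k :: 'n) (a :: real^'n) (b :: real^'n) (g :: real^'n \<Rightarrow> real).
          orthogonal_transformation Q \<and>
          ball x0 R0 \<subseteq> {x. Q (x - x0) \<in> box a b} \<and>
          (\<forall>u v. (\<forall>i. i \<noteq> k \<longrightarrow> u$i = v$i) \<longrightarrow> g u = g v) \<and>
          lipschitz_on L UNIV g \<and>
          \<Omega> \<inter> {x. Q (x - x0) \<in> box a b} =
            {x. Q (x - x0) \<in> box a b \<and> (Q (x - x0))$k < g (Q (x - x0))})"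

definition holder_norm_le :: "('a::metric_space) set \<Rightarrow> ('a \<Rightarrow> 'b::real_normed_vector) \<Rightarrow> real \<Rightarrow> real \<Rightarrow> bool" where
  "holder_norm_le U F \<alpha> M \<longleftrightarrow>
     (\<exists>A B. A + B \<le> M \<and> (\<forall>x\<in>U. norm (F x) \<le> A) \<and>
        (\<forall>x\<in>U. \<forall>z\<in>U. norm (F x - F z) \<le> B * dist x z powr \<alpha>))"

definition C1_alpha :: "(real^'n) set \<Rightarrow> (real^'n \<Rightarrow> real^'m) \<Rightarrow> real \<Rightarrow> bool" where
  "C1_alpha U f \<alpha> \<longleftrightarrow>
     (\<exists>f'. (\<forall>x\<in>U. (f has_derivative f' x) (at x)) \<and>
        (\<exists>M. holder_norm_le U (\<lambda>x. matrix (f' x)) \<alpha> M))"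

end

theory Submission
  imports Defs
begin

lemma mat_vec_norm_le:
  fixes A :: "real^'n^'m"
  shows "norm (A *v x) \<le> norm A * norm x"
proof -
  have "norm (A *v x) = L2_set (\<lambda>i. norm ((A *v x)$i)) UNIV" by (simp add: norm_vec_def)
  also have "\<dots> \<le> L2_set (\<lambda>i. norm (A$i) * norm x) UNIV"
  proof (rule L2_set_mono)
    fix i
    have "(A *v x)$i = A$i \<bullet> x" by (simp add: matrix_mult_dot)
    then show "norm ((A *v x)$i) \<le> norm (A$i) * norm x"
      using Cauchy_Schwarz_ineq2[of "A$i" x] by simp
  qed simp
  also have "\<dots> = L2_set (\<lambda>i. norm (A$i)) UNIV * norm x"
    by (simp add: L2_set_left_distrib)
  also have "\<dots> = norm A * norm x" by (simp add: norm_vec_def)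
  finally show ?thesis .
qed

lemma norm_sq_entries:
  fixes B :: "real^'n^'m"
  shows "(norm B)^2 = (\<Sum>i\<in>UNIV. \<Sum>j\<in>UNIV. (B$i$j)^2)"
  unfolding power2_norm_eq_inner inner_vec_def by (simp add: power2_eq_square)

lemma norm_sq_columns:
  fixes B :: "real^'n^'m"
  shows "(norm B)^2 = (\<Sum>j\<in>UNIV. (norm (column j B))^2)"
proof -
  have "\<And>j. (norm (column j B))^2 = (\<Sum>i\<in>UNIV. (B$i$j)^2)"
    unfolding power2_norm_eq_inner inner_vec_def column_def by (simp add: power2_eq_square)
  then show ?thesis unfolding norm_sq_entries by (simp only:) (rule sum.swap)
qed

lemma norm_matrix_bound_op:
  fixes B :: "real^'n^'m"
  assumes "\<And>z. norm (B *v z) \<le> c * norm z"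
  shows "norm B \<le> sqrt (CARD('n)) * c"
proof -
  have "norm (B *v axis undefined 1) \<le> c" using assms[of "axis undefined 1"] by simp
  then have c: "0 \<le> c" using norm_ge_zero[of "B *v axis undefined 1"] by linarith
  have "(norm B)^2 = (\<Sum>j\<in>UNIV. (norm (B *v axis j 1))^2)"
    unfolding norm_sq_columns by (simp add: matrix_vector_mult_basis)
  also have "\<dots> \<le> (\<Sum>j\<in>(UNIV::'n set). c^2)"
  proof (rule sum_mono)
    fix j :: 'n
    have "norm (B *v axis j 1) \<le> c" using assms[of "axis j 1"] by simp
    then show "(norm (B *v axis j 1))^2 \<le> c^2" by (simp add: power_mono)
  qed
  also have "\<dots> = (sqrt (CARD('n)) * c)^2" by (simp add: power_mult_distrib)
  finally show ?thesis by (rule power2_le_imp_le) (use c in simp)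
qed

lemma gs_exists:
  fixes A :: "real^'n^'n"
  shows "\<exists>C::real^'n^'n. det C = det A \<and> (\<forall>i. norm (row i C) \<le> norm (row i A)) \<and>
     (\<forall>i\<in>S. \<forall>j\<in>S. i \<noteq> j \<longrightarrow> row i C \<bullet> row j C = 0)"
proof -
  have "finite S" by simp
  then show ?thesis
  proof (induction S rule: finite_induct)
    case empty
    then show ?case by auto
  next
    case (insert j S)
    then obtain C :: "real^'n^'n" where C: "det C = det A" "\<forall>i. norm (row i C) \<le> norm (row i A)"
      "\<forall>i\<in>S. \<forall>j\<in>S. i \<noteq> j \<longrightarrow> row i C \<bullet> row j C = 0" by blast
    define T where "T = {row i C |i. i \<in> S}"
    obtain yv z where yz: "yv \<in> span T" "\<And>w. w \<in> span T \<Longrightarrow> orthogonal z w" "row j C = yv + z"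
      using orthogonal_subspace_decomp_exists by blast
    define C' where "C' = (\<chi> k. if k = j then row j C + (- yv) else row k C)"
    have "span T \<subseteq> span {row i C |i. i \<noteq> j}"
      by (rule span_mono) (use insert(2) in \<open>auto simp: T_def\<close>)
    then have "- yv \<in> vec.span {row i C |i. i \<noteq> j}"
      using yz(1) span_neg unfolding span_vec_eq by blast
    then have d: "det C' = det C" unfolding C'_def by (rule det_row_span)
    have rj: "row j C' = z" using yz(3) by (simp add: C'_def row_def vec_eq_iff)
    have rk: "row k C' = row k C" if "k \<noteq> j" for k using that by (simp add: C'_def row_def vec_eq_iff)
    have oz: "z \<bullet> row i C = 0" if "i \<in> S" for i
      using yz(2)[of "row i C"] that by (auto simp: T_def orthogonal_def intro: span_base)
    have "norm z \<le> norm (row j C)"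
    proof -
      have "orthogonal yv z" using yz(2)[OF yz(1)] by (simp add: orthogonal_commute)
      then have "(norm (row j C))^2 = (norm yv)^2 + (norm z)^2"
        using yz(3) norm_add_Pythagorean by metis
      then show ?thesis by (smt (verit) norm_ge_zero power2_le_imp_le zero_le_power2)
    qed
    then have "\<forall>i. norm (row i C') \<le> norm (row i A)"
      using C(2) rj rk by (metis order_trans)
    moreover have "\<forall>i\<in>insert j S. \<forall>k\<in>insert j S. i \<noteq> k \<longrightarrow> row i C' \<bullet> row k C' = 0"
    proof (intro ballI impI)
      fix i k assume ik: "i \<in> insert j S" "k \<in> insert j S" "i \<noteq> k"
      show "row i C' \<bullet> row k C' = 0"
      proof (cases "i = j")
        case True
        then have "k \<in> S" "k \<noteq> j" using ik by auto
        then show ?thesis using True rj rk oz by simp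
      next
        case False
        show ?thesis
        proof (cases "k = j")
          case True
          then have "i \<in> S" using ik False by auto
          then show ?thesis using True False rj rk oz by (simp add: inner_commute)
        next
          case False2: False
          then have "i \<in> S" "k \<in> S" using ik False by auto
          then show ?thesis using False False2 rk C(3) ik(3) by simp
        qed
      qed
    qed
    ultimately show ?case using d C(1) by metis
  qed
qed

lemma hadamard_rows:
  fixes A :: "real^'n^'n"
  shows "\<bar>det A\<bar> \<le> (\<Prod>i\<in>UNIV. norm (row i A))"
proof -
  obtain C :: "real^'n^'n" where C: "det C = det A" "\<forall>i. norm (row i C) \<le> norm (row i A)"
      "\<forall>i\<in>UNIV. \<forall>j\<in>UNIV. i \<noteq> j \<longrightarrow> row i C \<bullet> row j C = 0"
    using gs_exists[of A UNIV] by blast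
  have "det (C ** transpose C) = (\<Prod>i\<in>UNIV. row i C \<bullet> row i C)"
    unfolding matrix_mult_transpose_dot_row
    by (subst det_diagonal) (use C(3) in auto)
  moreover have "det (C ** transpose C) = (det A)^2"
    by (simp add: det_mul det_transpose C(1) power2_eq_square)
  ultimately have "(det A)^2 = (\<Prod>i\<in>UNIV. (norm (row i C))^2)"
    by (simp add: power2_norm_eq_inner)
  also have "\<dots> \<le> (\<Prod>i\<in>UNIV. (norm (row i A))^2)"
    by (rule prod_mono) (use C(2) in \<open>auto intro: power_mono\<close>)
  also have "\<dots> = (\<Prod>i\<in>UNIV. norm (row i A))^2" by (simp add: prod_power_distrib)
  finally have "(det A)^2 \<le> (\<Prod>i\<in>UNIV. norm (row i A))^2" .
  then show ?thesis
    by (metis abs_le_square_iff abs_of_nonneg norm_ge_zero prod_nonneg)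
qed

lemma hadamard_cols:
  fixes A :: "real^'n^'n"
  shows "\<bar>det A\<bar> \<le> (\<Prod>i\<in>UNIV. norm (column i A))"
  using hadamard_rows[of "transpose A"] by (simp add: det_transpose row_transpose)


lemma column_mult: "column i ((A::real^'n^'m) ** U) = A *v column i (U::real^'k^'n)"
  by (simp add: column_def matrix_matrix_mult_def matrix_vector_mult_def vec_eq_iff)

lemma det_lower:
  fixes A :: "real^'n^'n"
  assumes "norm A \<le> M" "\<delta> \<le> det A" "0 < \<delta>" "0 < M"
  shows "\<delta> / M^(CARD('n)-1) * norm z \<le> norm (A *v z)"
proof (cases "z = 0")
  case True then show ?thesis by simp
next
  case False
  define e where "e = z /\<^sub>R norm z"
  have ne: "norm e = 1" using False by (simp add: e_def)
  define i0 :: 'n where "i0 = undefined"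
  obtain U where U: "orthogonal_matrix U" "U *v axis i0 1 = e"
    using orthogonal_matrix_exists_basis[OF ne] by metis
  define B where "B = A ** U"
  have dB: "\<bar>det B\<bar> = det A"
    using det_orthogonal_matrix[OF U(1)] assms by (auto simp: B_def det_mul)
  have cB: "column i B = A *v (U *v axis i 1)" for i
    by (simp add: B_def column_mult matrix_vector_mult_basis)
  have oU: "orthogonal_transformation ((*v) U)"
    using U(1) by (simp add: orthogonal_transformation_matrix)
  have nU: "norm (U *v axis i 1) = 1" for i
    using orthogonal_transformation_norm[OF oU, of "axis i 1"] by simp
  have cle: "norm (column i B) \<le> M" for i
  proof -
    have "norm (column i B) \<le> norm A * norm (U *v axis i 1)"
      unfolding cB by (rule mat_vec_norm_le)
    then show ?thesis using nU assms(1) by simp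
  qed
  have "\<delta> \<le> (\<Prod>i\<in>UNIV. norm (column i B))"
    using hadamard_cols[of B] dB assms(2) by simp
  also have "\<dots> = norm (column i0 B) * (\<Prod>i\<in>UNIV - {i0}. norm (column i B))"
    by (simp add: prod.remove)
  also have "\<dots> \<le> norm (A *v e) * M^(CARD('n)-1)"
  proof (rule mult_mono)
    show "norm (column i0 B) \<le> norm (A *v e)" by (simp add: cB U(2))
    have "(\<Prod>i\<in>UNIV - {i0}. norm (column i B)) \<le> (\<Prod>i\<in>UNIV - {i0}. M)"
      by (rule prod_mono) (simp add: cle)
    also have "\<dots> = M^(CARD('n)-1)" by (simp add: card_Diff_singleton)
    finally show "(\<Prod>i\<in>UNIV - {i0}. norm (column i B)) \<le> M^(CARD('n)-1)" .
  qed (auto intro: prod_nonneg)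
  finally have f: "\<delta> \<le> norm (A *v e) * M^(CARD('n)-1)" .
  have Mp: "0 < M^(CARD('n)-1)" using assms(4) by simp
  have le: "\<delta> / M^(CARD('n)-1) \<le> norm (A *v e)"
    using f Mp by (simp add: pos_divide_le_eq)
  have "A *v z = norm z *\<^sub>R (A *v e)"
    using False by (simp add: e_def matrix_vector_mult_scaleR)
  then have "norm (A *v z) = norm z * norm (A *v e)" by simp
  moreover have "norm z * (\<delta> / M^(CARD('n)-1)) \<le> norm z * norm (A *v e)"
    using le by (rule mult_left_mono) simp
  ultimately show ?thesis by (simp only: mult.commute[of "\<delta> / M^(CARD('n)-1)"])
qed


lemma path_bound:
  fixes f :: "'a::euclidean_space \<Rightarrow> 'b::real_normed_vector"
  assumes S: "open S" and der: "\<forall>x\<in>S. (f has_derivative f' x) (at x)"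
    and bd: "\<forall>x\<in>S. \<forall>h. norm (f' x h) \<le> K * norm h" and K: "0 \<le> K"
    and pS: "p ` {0..1} \<subseteq> S"
    and pl: "\<forall>s\<in>{0..1}. \<forall>t\<in>{0..1}. norm (p s - p t) \<le> \<Lambda> * \<bar>s - t\<bar>"
  shows "norm (f (p 1) - f (p 0)) \<le> K * \<Lambda>"
proof -
  have "norm (p 1 - p 0) \<le> \<Lambda> * 1" using pl[rule_format, of 1 0] by simp
  then have L: "0 \<le> \<Lambda>" using norm_ge_zero[of "p 1 - p 0"] by linarith
  have cont: "continuous_on {0..1} p"
    unfolding continuous_on_iff
  proof (intro ballI allI impI)
    fix x e :: real assume x: "x \<in> {0..1}" and e: "0 < e"
    show "\<exists>d>0. \<forall>x'\<in>{0..1}. dist x' x < d \<longrightarrow> dist (p x') (p x) < e"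
    proof (intro exI[of _ "e / (\<Lambda> + 1)"] conjI ballI impI)
      show "0 < e / (\<Lambda> + 1)" using e L by simp
      fix x' assume x': "x' \<in> {0..1}" and d: "dist x' x < e / (\<Lambda> + 1)"
      have "dist (p x') (p x) \<le> \<Lambda> * \<bar>x' - x\<bar>" using pl x x' by (simp add: dist_norm)
      also have "\<dots> \<le> (\<Lambda> + 1) * \<bar>x' - x\<bar>" by (simp add: mult_right_mono)
      also have "\<dots> < e" using d L by (simp add: dist_real_def pos_less_divide_eq mult.commute)
      finally show "dist (p x') (p x) < e" .
    qed
  qed
  have "compact (p ` {0..1})" by (rule compact_continuous_image[OF cont compact_Icc])
  then obtain \<epsilon> where \<epsilon>: "\<epsilon> > 0" "(\<Union>x\<in>p ` {0..1}. ball x \<epsilon>) \<subseteq> S"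
    using compact_subset_open_imp_ball_epsilon_subset[OF _ S pS] by metis
  obtain N :: nat where N: "\<Lambda> / \<epsilon> < N" using reals_Archimedean2 by blast
  have "0 \<le> \<Lambda> / \<epsilon>" using L \<epsilon>(1) by simp
  then have "0 < real N" using N by linarith
  then have Npos: "0 < N" by simp
  have NL: "\<Lambda> / N < \<epsilon>" using N Npos \<epsilon>(1) by (simp add: divide_less_eq mult.commute)
  have step: "norm (f (p ((j+1)/N)) - f (p (j/N))) \<le> K * (\<Lambda> / N)" if j: "j + 1 \<le> N" for j :: nat
  proof -
    have t1: "real j / N \<in> {0..1}" "real (j+1) / N \<in> {0..1}" using j Npos by auto
    define a where "a = p (j/N)"
    define b where "b = p ((j+1)/N)"
    have "norm (b - a) \<le> \<Lambda> * \<bar>real (j+1)/N - j/N\<bar>" using pl t1 by (simp add: a_def b_def)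
    also have "\<bar>real (j+1)/N - j/N\<bar> = 1 / N" by (simp add: diff_divide_distrib[symmetric])
    finally have ba: "norm (b - a) \<le> \<Lambda> / N" by simp
    have "a \<in> p ` {0..1}" using t1 by (simp add: a_def)
    then have ball: "ball a \<epsilon> \<subseteq> S" using \<epsilon>(2) by blast
    have bin: "b \<in> ball a \<epsilon>" using ba NL by (simp add: dist_norm norm_minus_commute)
    have "norm (f b - f a) \<le> K * norm (b - a)"
    proof (rule differentiable_bound[OF convex_ball])
      show "(f has_derivative f' x) (at x within ball a \<epsilon>)" if "x \<in> ball a \<epsilon>" for x
        using der ball that has_derivative_at_withinI by blast
      show "onorm (f' x) \<le> K" if "x \<in> ball a \<epsilon>" for x
      proof (rule onorm_le)
        show "norm (f' x h) \<le> K * norm h" for h using bd ball that by blast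
      qed
    qed (use bin \<epsilon>(1) in auto)
    also have "\<dots> \<le> K * (\<Lambda> / N)" using mult_left_mono[OF ba K] .
    finally show ?thesis by (simp add: a_def b_def)
  qed
  have "j \<le> N \<Longrightarrow> norm (f (p (j/N)) - f (p 0)) \<le> K * (\<Lambda> / N) * j" for j :: nat
  proof (induction j)
    case 0 then show ?case by simp
  next
    case (Suc j)
    have "norm (f (p (Suc j/N)) - f (p 0)) \<le> norm (f (p ((j+1)/N)) - f (p (j/N))) + norm (f (p (j/N)) - f (p 0))"
      using norm_triangle_ineq[of "f (p ((j+1)/N)) - f (p (j/N))" "f (p (j/N)) - f (p 0)"] by simp
    also have "\<dots> \<le> K * (\<Lambda> / N) + K * (\<Lambda> / N) * j"
      using step[of j] Suc by simp
    finally show ?case by (simp add: algebra_simps add_divide_distrib)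
  qed
  from this[of N] show ?thesis using Npos by simp
qed

definition upd :: "real^'n \<Rightarrow> 'n \<Rightarrow> real \<Rightarrow> real^'n" where
  "upd x k r = (\<chi> i. if i = k then r else x$i)"

lemma upd_nth [simp]: "(upd x k r)$i = (if i = k then r else x$i)"
  by (simp add: upd_def)

lemma norm_sq_split: "(norm x)^2 = (norm (upd x k 0))^2 + (x$k)^2"
proof -
  have e: "(norm y)^2 = (\<Sum>i\<in>UNIV. (y$i)^2)" for y :: "real^'n"
    unfolding power2_norm_eq_inner inner_vec_def by (simp add: power2_eq_square)
  have "(\<Sum>i\<in>UNIV. (x$i)^2) = (x$k)^2 + (\<Sum>i\<in>UNIV-{k}. (x$i)^2)"
    using sum.remove[of UNIV k "\<lambda>i. (x$i)^2"] by simp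
  moreover have "(\<Sum>i\<in>UNIV. ((upd x k 0)$i)^2) = (\<Sum>i\<in>UNIV-{k}. ((upd x k 0)$i)^2)"
    using sum.remove[of UNIV k "\<lambda>i. ((upd x k 0)$i)^2"] by simp
  moreover have "\<dots> = (\<Sum>i\<in>UNIV-{k}. (x$i)^2)" by (rule sum.cong) auto
  ultimately show ?thesis unfolding e by simp
qed

lemma upd_diff: "upd x k r - upd y k r' = upd (x - y) k (r - r')"
  by (simp add: vec_eq_iff)

lemma upd_scale: "upd (a *\<^sub>R x) k 0 = a *\<^sub>R upd x k 0"
  by (simp add: vec_eq_iff)

lemma upd_same [simp]: "upd x k (x$k) = x"
  by (simp add: vec_eq_iff)

lemma upd_upd [simp]: "upd (upd x k r) k r' = upd x k r'"
  by (simp add: vec_eq_iff)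

lemma norm_upd_sub: "norm (upd x k r - x) = \<bar>r - x$k\<bar>"
proof -
  have "upd x k r - x = (r - x$k) *\<^sub>R axis k 1"
    by (simp add: vec_eq_iff axis_def)
  then show ?thesis by simp
qed

lemma norm_upd_le: "norm (upd x k 0) \<le> norm x"
  using norm_sq_split[of x k] by (smt (verit) norm_ge_zero power2_le_imp_le zero_le_power2)

lemma chart_path:
  fixes u v :: "real^'n" and g :: "real^'n \<Rightarrow> real" and k :: 'n
  assumes g_ind: "\<forall>u v. (\<forall>i. i \<noteq> k \<longrightarrow> u$i = v$i) \<longrightarrow> g u = g v"
    and glip: "lipschitz_on L UNIV g" and L: "0 \<le> L"
    and uk: "u$k < g u" and vk: "v$k < g v"
    and nu: "norm u < 2*\<rho>" and nv: "norm v < 2*\<rho>" and nw: "norm (v - u) < 2*\<rho>"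
  shows "\<exists>q. q 0 = u \<and> q 1 = v \<and>
     (\<forall>t\<in>{0..1}. norm (q t) < (7 + 2*L)*\<rho> \<and> (q t)$k < g (q t)) \<and>
     (\<forall>s\<in>{0..1}. \<forall>t\<in>{0..1}. norm (q s - q t) \<le> sqrt (1 + L^2) * norm (v - u) * \<bar>s - t\<bar>)"
proof -
  have \<rho>: "0 < \<rho>" using nu by (smt (verit) norm_ge_zero)
  have gupd: "g (upd x k r) = g x" for x r
    using g_ind by simp
  have glipD: "\<bar>g x - g y\<bar> \<le> L * norm (x - y)" for x y
    using lipschitz_onD[OF glip, of x y] by (simp add: dist_norm dist_real_def)
  define w where "w = v - u"
  define c where "c = min \<rho> (min (g u - u$k) (g v - v$k))"
  have c: "0 < c" "c \<le> \<rho>" "c \<le> g u - u$k" "c \<le> g v - v$k" using \<rho> uk vk by (auto simp: c_def)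
  define seg where "seg t = u + t *\<^sub>R w" for t
  define m where "m t = min ((seg t)$k) (g (seg t) - c)" for t
  define q where "q t = upd (seg t) k (m t)" for t
  have q0: "q 0 = u" using c by (simp add: q_def m_def seg_def)
  have q1: "q 1 = v" using c by (simp add: q_def m_def seg_def w_def)
  have seg_n: "norm (seg t) < 2*\<rho>" if "t \<in> {0..1}" for t
  proof -
    have "seg t = (1 - t) *\<^sub>R u + t *\<^sub>R v" by (simp add: seg_def w_def algebra_simps)
    then have "norm (seg t) \<le> (1 - t) * norm u + t * norm v"
      using that by (metis atLeastAtMost_iff diff_ge_0_iff_ge norm_scaleR norm_triangle_le abs_of_nonneg order_refl)
    also have "\<dots> < 2*\<rho>"
    proof (cases "t = 0")
      case True then show ?thesis using nu by simp
    next
      case False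
      then have "0 < t" using that by auto
      then have "t * norm v < t * (2*\<rho>)" using nv by simp
      moreover have "(1-t) * norm u \<le> (1-t) * (2*\<rho>)" using that nu by (simp add: mult_left_mono)
      ultimately show ?thesis by (simp add: algebra_simps)
    qed
    finally show ?thesis .
  qed
  have bounds: "norm (q t) < (7 + 2*L)*\<rho> \<and> (q t)$k < g (q t)" if t: "t \<in> {0..1}" for t
  proof -
    have sn: "norm (seg t) < 2*\<rho>" using seg_n[OF t] .
    have "\<bar>(seg t)$k\<bar> \<le> norm (seg t)" by (rule component_le_norm_cart)
    then have sk: "-2*\<rho> < (seg t)$k" "(seg t)$k < 2*\<rho>" using sn by auto
    have "\<bar>(u)$k\<bar> \<le> norm u" by (rule component_le_norm_cart)
    then have ukb: "-2*\<rho> < u$k" using nu by auto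
    have "norm (seg t - u) = t * norm w" using t by (simp add: seg_def)
    also have "\<dots> \<le> norm w" using t by (simp add: mult_left_le_one_le)
    finally have "norm (seg t - u) < 2*\<rho>" using nw by (simp add: w_def)
    then have "L * norm (seg t - u) \<le> L * (2*\<rho>)" using L by (simp add: mult_left_mono)
    then have "g (seg t) \<ge> g u - L * (2*\<rho>)" using glipD[of "seg t" u] by linarith
    then have gs: "g (seg t) - c > -3*\<rho> - 2*L*\<rho>" using ukb uk c by (simp add: algebra_simps)
    have "m t \<le> (seg t)$k" "m t > -3*\<rho> - 2*L*\<rho>"
      using gs sk mult_nonneg_nonneg[OF L less_imp_le[OF \<rho>]] \<rho> by (auto simp: m_def)
    then have mb: "\<bar>m t - (seg t)$k\<bar> < (5 + 2*L)*\<rho>" using sk by (simp add: algebra_simps)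
    have "norm (q t) \<le> norm (seg t) + norm (q t - seg t)"
      by (metis add.commute diff_add_cancel norm_triangle_ineq)
    also have "norm (q t - seg t) = \<bar>m t - (seg t)$k\<bar>" by (simp add: q_def norm_upd_sub)
    finally have "norm (q t) < (7 + 2*L)*\<rho>" using sn mb by (simp add: algebra_simps)
    moreover have "(q t)$k < g (q t)" using c by (simp add: q_def gupd m_def)
    ultimately show ?thesis by simp
  qed
  have lip: "norm (q s - q t) \<le> sqrt (1 + L^2) * norm w * \<bar>s - t\<bar>" for s t
  proof -
    define w' where "w' = upd w k 0"
    have d1: "q s - q t = upd ((s - t) *\<^sub>R w) k (m s - m t)"
      by (simp add: q_def upd_diff seg_def algebra_simps)
    have "(norm (q s - q t))^2 = (norm ((s - t) *\<^sub>R w'))^2 + (m s - m t)^2"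
      unfolding d1 using norm_sq_split[of "upd ((s - t) *\<^sub>R w) k (m s - m t)" k]
      by (simp add: upd_scale w'_def)
    also have "(norm ((s - t) *\<^sub>R w'))^2 = (s-t)^2 * (norm w')^2"
      by (simp add: power_mult_distrib)
    finally have eq: "(norm (q s - q t))^2 = (s-t)^2 * (norm w')^2 + (m s - m t)^2" .
    have a: "\<bar>(seg s)$k - (seg t)$k\<bar> = \<bar>s - t\<bar> * \<bar>w$k\<bar>"
      by (simp add: seg_def algebra_simps abs_mult[symmetric])
    have "upd (seg s) k ((seg t)$k) - seg t = upd (seg s - seg t) k 0"
      using upd_diff[of "seg s" k "(seg t)$k" "seg t" "(seg t)$k"] by simp
    also have "\<dots> = (s - t) *\<^sub>R w'" by (simp add: seg_def w'_def upd_scale[symmetric] algebra_simps)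
    finally have "\<bar>g (seg s) - g (seg t)\<bar> \<le> L * (\<bar>s - t\<bar> * norm w')"
      using glipD[of "upd (seg s) k ((seg t)$k)" "seg t"] by (simp add: gupd)
    then have "\<bar>m s - m t\<bar> \<le> max (\<bar>s - t\<bar> * \<bar>w$k\<bar>) (L * (\<bar>s - t\<bar> * norm w'))"
      using a unfolding m_def by linarith
    then have "(m s - m t)^2 \<le> (max (\<bar>s - t\<bar> * \<bar>w$k\<bar>) (L * (\<bar>s - t\<bar> * norm w')))^2"
      by (simp add: abs_le_square_iff[symmetric] abs_of_nonneg L)
    also have "\<dots> \<le> (s-t)^2 * (w$k)^2 + L^2 * ((s-t)^2 * (norm w')^2)"
      by (simp add: max_def power_mult_distrib)
    finally have "(norm (q s - q t))^2 \<le> (s-t)^2 * ((norm w')^2 + (w$k)^2 + L^2 * (norm w')^2)"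
      using eq by (simp add: algebra_simps)
    also have "\<dots> \<le> (s-t)^2 * ((1 + L^2) * ((norm w')^2 + (w$k)^2))"
      by (rule mult_left_mono) (auto simp: algebra_simps)
    also have "\<dots> = (sqrt (1 + L^2) * norm w * \<bar>s - t\<bar>)^2"
      using norm_sq_split[of w k] by (simp add: w'_def power_mult_distrib)
    finally show ?thesis
      by (rule power2_le_imp_le) simp
  qed
  show ?thesis
    using q0 q1 bounds lip by (auto simp: w_def)
qed

lemma dist2: "x1 \<in> ball xb \<rho> \<Longrightarrow> x0 \<in> ball xb \<rho> \<Longrightarrow> norm (x1 - x0) < 2*\<rho>"
proof -
  assume a: "x1 \<in> ball xb \<rho>" "x0 \<in> ball xb \<rho>"
  have "dist x1 x0 \<le> dist x1 xb + dist xb x0" by (rule dist_triangle)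
  then show ?thesis using a by (simp add: dist_norm norm_minus_commute)
qed

lemma path_exists:
  fixes \<Omega> :: "(real^'n) set"
  assumes op: "open \<Omega>" and R0: "0 < R0"
    and chart: "\<forall>x0\<in>frontier \<Omega>.
        \<exists>(Q :: real^'n \<Rightarrow> real^'n) (k :: 'n) (a :: real^'n) (b :: real^'n) (g :: real^'n \<Rightarrow> real).
          orthogonal_transformation Q \<and>
          ball x0 R0 \<subseteq> {x. Q (x - x0) \<in> box a b} \<and>
          (\<forall>u v. (\<forall>i. i \<noteq> k \<longrightarrow> u$i = v$i) \<longrightarrow> g u = g v) \<and>
          lipschitz_on L UNIV g \<and>
          \<Omega> \<inter> {x. Q (x - x0) \<in> box a b} =
            {x. Q (x - x0) \<in> box a b \<and> (Q (x - x0))$k < g (Q (x - x0))}"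
    and L: "0 \<le> L" and xb: "xb \<in> closure \<Omega>" and \<rho>: "0 < \<rho>" "(9 + 2*L)*\<rho> \<le> R0"
    and x1: "x1 \<in> ball xb \<rho> \<inter> \<Omega>" and x2: "x2 \<in> ball xb \<rho> \<inter> \<Omega>"
  shows "\<exists>p. p 0 = x1 \<and> p 1 = x2 \<and> p ` {0..1} \<subseteq> \<Omega> \<inter> ball x1 ((9 + 2*L)*\<rho>) \<and>
     (\<forall>s\<in>{0..1}. \<forall>t\<in>{0..1}. norm (p s - p t) \<le> sqrt (1 + L^2) * norm (x2 - x1) * \<bar>s - t\<bar>)"
proof -
  have Lam: "1 \<le> sqrt (1 + L^2)" by simp
  have nw: "norm (x2 - x1) < 2*\<rho>"
    using dist2[of x2 xb \<rho> x1] x1 x2 by blast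
  show ?thesis
  proof (cases "ball xb \<rho> \<inter> frontier \<Omega> = {}")
    case True
    have sub: "ball xb \<rho> \<subseteq> \<Omega>"
    proof (rule ccontr)
      assume "\<not> ball xb \<rho> \<subseteq> \<Omega>"
      then have "ball xb \<rho> - \<Omega> \<noteq> {}" by blast
      moreover have "ball xb \<rho> \<inter> \<Omega> \<noteq> {}" using x1 by blast
      ultimately have "ball xb \<rho> \<inter> frontier \<Omega> \<noteq> {}"
        using connected_Int_frontier[OF connected_ball] by blast
      then show False using True by blast
    qed
    define p where "p t = x1 + t *\<^sub>R (x2 - x1)" for t
    have "p ` {0..1} \<subseteq> ball xb \<rho>"
    proof
      fix z assume "z \<in> p ` {0..1}"
      then obtain t where t: "t \<in> {0..1}" "z = p t" by blast
      have "p t = (1 - t) *\<^sub>R x1 + t *\<^sub>R x2" by (simp add: p_def algebra_simps)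
      then show "z \<in> ball xb \<rho>"
        using convexD[OF convex_ball[of xb \<rho>], of x1 x2 "1 - t" t] x1 x2 t by auto
    qed
    moreover have "p ` {0..1} \<subseteq> ball x1 ((9 + 2*L)*\<rho>)"
    proof
      fix z assume "z \<in> p ` {0..1}"
      then obtain t where t: "t \<in> {0..1}" "z = p t" by blast
      have "norm (x1 - p t) = t * norm (x2 - x1)" using t by (simp add: p_def)
      also have "\<dots> \<le> norm (x2 - x1)" using t by (simp add: mult_left_le_one_le)
      also have "\<dots> < (9 + 2*L)*\<rho>" using nw \<rho>(1) mult_nonneg_nonneg[OF L less_imp_le[OF \<rho>(1)]] by (simp add: algebra_simps)
      finally show "z \<in> ball x1 ((9 + 2*L)*\<rho>)" using t by (simp add: dist_norm)
    qed
    moreover have "norm (p s - p t) \<le> sqrt (1 + L^2) * norm (x2 - x1) * \<bar>s - t\<bar>" for s t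
    proof -
      have "p s - p t = (s - t) *\<^sub>R (x2 - x1)" by (simp add: p_def algebra_simps)
      then have "norm (p s - p t) = \<bar>s - t\<bar> * norm (x2 - x1)" by simp
      also have "\<dots> \<le> sqrt (1 + L^2) * (\<bar>s - t\<bar> * norm (x2 - x1))"
        using mult_right_mono[OF Lam, of "\<bar>s - t\<bar> * norm (x2 - x1)"] by simp
      finally show ?thesis by (simp add: algebra_simps)
    qed
    ultimately show ?thesis using sub
      by (intro exI[of _ p]) (auto simp: p_def)
  next
    case False
    then obtain x0 where x0: "x0 \<in> ball xb \<rho>" "x0 \<in> frontier \<Omega>" by blast
    then obtain Q :: "real^'n \<Rightarrow> real^'n" and k :: 'n and a b :: "real^'n" and g :: "real^'n \<Rightarrow> real" where Q: "orthogonal_transformation Q"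
      and box: "ball x0 R0 \<subseteq> {x. Q (x - x0) \<in> box a b}"
      and gind: "\<forall>u v. (\<forall>i. i \<noteq> k \<longrightarrow> u$i = v$i) \<longrightarrow> g u = g v"
      and glip: "lipschitz_on L UNIV g"
      and eq: "\<Omega> \<inter> {x. Q (x - x0) \<in> box a b} =
            {x. Q (x - x0) \<in> box a b \<and> (Q (x - x0))$k < g (Q (x - x0))}"
      using bspec[OF chart x0(2)] by blast
    define Qi where "Qi = inv Q"
    have Qi: "orthogonal_transformation Qi" using orthogonal_transformation_inv[OF Q] by (simp add: Qi_def)
    have QQi: "Q (Qi z) = z" for z
      using orthogonal_transformation_surj[OF Q] by (simp add: Qi_def surj_f_inv_f)
    have QiQ: "Qi (Q z) = z" for z
      using orthogonal_transformation_inj[OF Q] by (simp add: Qi_def inv_f_f)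
    have nQ: "norm (Q z) = norm z" for z using Q orthogonal_transformation_norm by blast
    have nQi: "norm (Qi z) = norm z" for z using Qi orthogonal_transformation_norm by blast
    have linQi: "linear Qi" using Qi orthogonal_transformation_linear by blast
    define u where "u = Q (x1 - x0)"
    define v where "v = Q (x2 - x0)"
    have d1: "norm (x1 - x0) < 2*\<rho>" using x1 x0 dist2 by blast
    have d2: "norm (x2 - x0) < 2*\<rho>" using x2 x0 dist2 by blast
    have LR: "2*\<rho> \<le> R0" using \<rho> mult_nonneg_nonneg[OF L less_imp_le[OF \<rho>(1)]] by (simp add: algebra_simps)
    have inbox: "Q (x - x0) \<in> box a b" if "norm (x - x0) < R0" for x
      using box that by (auto simp: dist_norm norm_minus_commute)
    have uk: "u$k < g u"
    proof -
      have "x1 \<in> \<Omega> \<inter> {x. Q (x - x0) \<in> box a b}" using x1 inbox[of x1] d1 LR by auto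
      then show ?thesis unfolding eq by (simp add: u_def)
    qed
    have vk: "v$k < g v"
    proof -
      have "x2 \<in> \<Omega> \<inter> {x. Q (x - x0) \<in> box a b}" using x2 inbox[of x2] d2 LR by auto
      then show ?thesis unfolding eq by (simp add: v_def)
    qed
    have vu: "v - u = Q (x2 - x1)"
      using orthogonal_transformation_linear[OF Q] by (simp add: u_def v_def linear_diff[symmetric])
    have nu: "norm u < 2*\<rho>" "norm v < 2*\<rho>" "norm (v - u) < 2*\<rho>"
    proof -
      have "norm u = norm (x1 - x0)" "norm v = norm (x2 - x0)" "norm (v - u) = norm (x2 - x1)"
        by (simp only: u_def nQ, simp only: v_def nQ, simp only: vu nQ)
      then show "norm u < 2*\<rho>" "norm v < 2*\<rho>" "norm (v - u) < 2*\<rho>" using d1 d2 nw by simp_all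
    qed
    obtain q where q: "q 0 = u" "q 1 = v"
      "\<forall>t\<in>{0..1}. norm (q t) < (7 + 2*L)*\<rho> \<and> (q t)$k < g (q t)"
      "\<forall>s\<in>{0..1}. \<forall>t\<in>{0..1}. norm (q s - q t) \<le> sqrt (1 + L^2) * norm (v - u) * \<bar>s - t\<bar>"
      using chart_path[OF gind glip L uk vk nu] by blast
    define p where "p t = x0 + Qi (q t)" for t
    have Tp: "Q (p t - x0) = q t" for t by (simp add: p_def QQi)
    have p0: "p 0 = x1" by (simp add: p_def q u_def QiQ)
    have p1: "p 1 = x2" by (simp add: p_def q v_def QiQ)
    have pdiff: "p s - p t = Qi (q s - q t)" for s t
      by (simp add: p_def linear_diff[OF linQi])
    have "p t \<in> \<Omega> \<inter> ball x1 ((9 + 2*L)*\<rho>)" if t: "t \<in> {0..1}" for t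
    proof -
      have qt: "norm (q t) < (7 + 2*L)*\<rho>" "(q t)$k < g (q t)" using q(3) t by auto
      have "norm (p t - x0) = norm (q t)" by (simp add: p_def nQi)
      also have "\<dots> < R0" using qt \<rho> by (simp add: algebra_simps)
      finally have "Q (p t - x0) \<in> box a b" by (rule inbox)
      then have "p t \<in> {x. Q (x - x0) \<in> box a b \<and> (Q (x - x0))$k < g (Q (x - x0))}"
        using qt by (simp add: Tp)
      then have pin: "p t \<in> \<Omega>" unfolding eq[symmetric] by blast
      have "norm (p t - x1) = norm (q t - q 0)" by (simp add: p0[symmetric] pdiff nQi)
      also have "\<dots> \<le> norm (q t) + norm (q 0)" by (rule norm_triangle_ineq4)
      also have "\<dots> < (9 + 2*L)*\<rho>" using qt nu q(1) by (simp add: algebra_simps)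
      finally show ?thesis using pin by (simp add: dist_norm norm_minus_commute)
    qed
    moreover have "\<forall>s\<in>{0..1}. \<forall>t\<in>{0..1}. norm (p s - p t) \<le> sqrt (1 + L^2) * norm (x2 - x1) * \<bar>s - t\<bar>"
      using q(4) by (simp add: pdiff nQi vu nQ)
    ultimately show ?thesis using p0 p1 by (intro exI[of _ p]) blast
  qed
qed

lemma minv:
  fixes A :: "real^'n^'n"
  assumes "det A \<noteq> 0"
  shows "A ** matrix_inv A = mat 1" "matrix_inv A ** A = mat 1"
proof -
  have "invertible A" using assms by (simp add: invertible_det_nz)
  then have "\<exists>A'. A ** A' = mat 1 \<and> A' ** A = mat 1" by (simp add: invertible_def)
  then have "A ** matrix_inv A = mat 1 \<and> matrix_inv A ** A = mat 1"
    unfolding matrix_inv_def by (rule someI_ex)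
  then show "A ** matrix_inv A = mat 1" "matrix_inv A ** A = mat 1" by auto
qed

lemma mw: "linear f \<Longrightarrow> matrix f *v h = f (h::real^'n)"
  by (rule matrix_works) (simp add: linear_matrix_vector_mul_eq)

lemma inv_bound:
  fixes A :: "real^'n^'n"
  assumes "norm A \<le> M" "\<delta> \<le> det A" "0 < \<delta>" "0 < M"
  shows "norm (matrix_inv A *v z) \<le> norm z / (\<delta> / M^(CARD('n)-1))"
proof -
  have m: "0 < \<delta> / M^(CARD('n)-1)" using assms(3,4) by simp
  have "det A \<noteq> 0" using assms by linarith
  then have "A *v (matrix_inv A *v z) = z" by (subst matrix_vector_mul_assoc) (simp add: minv)
  then have h: "\<delta> / M^(CARD('n)-1) * norm (matrix_inv A *v z) \<le> norm z"
    using det_lower[OF assms, of "matrix_inv A *v z"] by simp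
  have gen: "\<And>a x b::real. 0 < a \<Longrightarrow> a * x \<le> b \<Longrightarrow> x \<le> b / a"
    by (simp add: pos_le_divide_eq mult.commute)
  show ?thesis by (rule gen[OF m h])
qed


lemma mm_diff_l: "(A::real^'n^'m) ** (B - C) = A ** B - A ** (C::real^'k^'n)"
  by (simp add: matrix_matrix_mult_def vec_eq_iff sum_subtractf algebra_simps)

lemma mm_diff_r: "((B::real^'n^'m) - C) ** (A::real^'k^'n) = B ** A - C ** A"
  by (simp add: matrix_matrix_mult_def vec_eq_iff sum_subtractf algebra_simps)

lemma inv_diff:
  fixes A1 A2 :: "real^'n^'n"
  assumes "det A1 \<noteq> 0" "det A2 \<noteq> 0"
  shows "matrix_inv A1 - matrix_inv A2 = matrix_inv A1 ** (A2 - A1) ** matrix_inv A2"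
proof -
  have "matrix_inv A1 ** (A2 - A1) ** matrix_inv A2 =
        matrix_inv A1 ** (A2 ** matrix_inv A2) - (matrix_inv A1 ** A1) ** matrix_inv A2"
    by (simp add: mm_diff_l mm_diff_r matrix_mul_assoc)
  also have "\<dots> = matrix_inv A1 - matrix_inv A2" using assms by (simp add: minv)
  finally show ?thesis by simp
qed

lemma main_fixed:
  fixes \<Omega> :: "(real^'n) set" and y :: "real^'n \<Rightarrow> real^'n" and y' :: "real^'n \<Rightarrow> real^'n \<Rightarrow> real^'n"
  assumes op: "open \<Omega>" and R0: "0 < R0"
    and chart: "\<forall>x0\<in>frontier \<Omega>.
        \<exists>(Q :: real^'n \<Rightarrow> real^'n) (k :: 'n) (a :: real^'n) (b :: real^'n) (g :: real^'n \<Rightarrow> real).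
          orthogonal_transformation Q \<and>
          ball x0 R0 \<subseteq> {x. Q (x - x0) \<in> box a b} \<and>
          (\<forall>u v. (\<forall>i. i \<noteq> k \<longrightarrow> u$i = v$i) \<longrightarrow> g u = g v) \<and>
          lipschitz_on L UNIV g \<and>
          \<Omega> \<inter> {x. Q (x - x0) \<in> box a b} =
            {x. Q (x - x0) \<in> box a b \<and> (Q (x - x0))$k < g (Q (x - x0))}"
    and L: "0 \<le> L" and \<alpha>: "0 < \<alpha>" and \<delta>: "0 < \<delta>" and M1: "0 < M1" and M2: "0 < M2"
    and \<rho>: "0 < \<rho>" "(9 + 2*L)*\<rho> \<le> R0"
    and key: "M2 * ((9 + 2*L)*\<rho>) powr \<alpha> * sqrt (1 + L^2) \<le> \<delta> / M1^(CARD('n)-1) / 2"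
    and der: "\<forall>x\<in>\<Omega>. (y has_derivative y' x) (at x)"
    and detb: "\<forall>x\<in>\<Omega>. det (matrix (y' x)) \<ge> \<delta>"
    and nb: "\<forall>x\<in>\<Omega>. norm (matrix (y' x)) \<le> M1"
    and hol: "holder_norm_le \<Omega> (\<lambda>x. matrix (y' x)) \<alpha> M2"
    and xb: "xb \<in> closure \<Omega>"
  shows "inj_on y (ball xb \<rho> \<inter> \<Omega>) \<and>
            (\<forall>x1\<in>ball xb \<rho> \<inter> \<Omega>. \<forall>x2\<in>ball xb \<rho> \<inter> \<Omega>.
               (1/2) * (\<delta> / M1 ^ (CARD('n) - 1)) * norm (x1 - x2) \<le> norm (y x1 - y x2) \<and>
               norm (y x1 - y x2) \<le> M1 * sqrt (1 + L^2) * norm (x1 - x2)) \<and>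
            C1_alpha (y ` (ball xb \<rho> \<inter> \<Omega>)) (the_inv_into (ball xb \<rho> \<inter> \<Omega>) y) \<alpha>"
proof -
  define U where "U = ball xb \<rho> \<inter> \<Omega>"
  define m where "m = \<delta> / M1^(CARD('n)-1)"
  define r where "r = (9 + 2*L)*\<rho>"
  define \<Lambda> where "\<Lambda> = sqrt (1 + L^2)"
  have m: "0 < m" using \<delta> M1 by (simp add: m_def)
  have r: "0 < r" using \<rho>(1) L by (simp add: r_def)
  have keyr: "M2 * r powr \<alpha> * \<Lambda> \<le> m / 2" using key by (simp add: r_def \<Lambda>_def m_def)
  have UO: "x \<in> \<Omega>" if "x \<in> U" for x using that by (simp add: U_def)
  have holder: "norm (matrix (y' x) - matrix (y' z)) \<le> M2 * dist x z powr \<alpha>" if xz: "x \<in> \<Omega>" "z \<in> \<Omega>" for x z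
  proof -
    obtain Ah Bh where h: "Ah + Bh \<le> M2" "\<forall>x\<in>\<Omega>. norm (matrix (y' x)) \<le> Ah"
      "\<forall>x\<in>\<Omega>. \<forall>z\<in>\<Omega>. norm (matrix (y' x) - matrix (y' z)) \<le> Bh * dist x z powr \<alpha>"
      using hol unfolding holder_norm_le_def by blast
    have "norm (matrix (y' x)) \<le> Ah" using h(2) xz(1) by blast
    then have "0 \<le> Ah" using norm_ge_zero[of "matrix (y' x)"] by linarith
    then have "Bh \<le> M2" using h(1) by linarith
    then have "Bh * dist x z powr \<alpha> \<le> M2 * dist x z powr \<alpha>" by (rule mult_right_mono) simp
    moreover have "norm (matrix (y' x) - matrix (y' z)) \<le> Bh * dist x z powr \<alpha>" using h(3) xz by blast
    ultimately show ?thesis by linarith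
  qed
  have lin: "linear (y' x)" if "x \<in> \<Omega>" for x using der that has_derivative_linear by blast
  have mwx: "matrix (y' x) *v h = y' x h" if "x \<in> \<Omega>" for x h using mw[OF lin[OF that]] .
  have path: "\<exists>p. p 0 = x1 \<and> p 1 = x2 \<and> p ` {0..1} \<subseteq> \<Omega> \<inter> ball x1 r \<and>
     (\<forall>s\<in>{0..1}. \<forall>t\<in>{0..1}. norm (p s - p t) \<le> \<Lambda> * norm (x2 - x1) * \<bar>s - t\<bar>)"
    if "x1 \<in> U" "x2 \<in> U" for x1 x2
    using path_exists[OF op R0 chart L xb \<rho>, of x1 x2] that by (simp add: U_def r_def \<Lambda>_def)
  have upper: "norm (y x2 - y x1) \<le> M1 * (\<Lambda> * norm (x2 - x1))" if xx: "x1 \<in> U" "x2 \<in> U" for x1 x2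
  proof -
    obtain p where p: "p 0 = x1" "p 1 = x2" "p ` {0..1} \<subseteq> \<Omega> \<inter> ball x1 r"
      "\<forall>s\<in>{0..1}. \<forall>t\<in>{0..1}. norm (p s - p t) \<le> \<Lambda> * norm (x2 - x1) * \<bar>s - t\<bar>"
      using path[OF xx] by blast
    have "norm (y (p 1) - y (p 0)) \<le> M1 * (\<Lambda> * norm (x2 - x1))"
    proof (rule path_bound[OF op der])
      show "\<forall>x\<in>\<Omega>. \<forall>h. norm (y' x h) \<le> M1 * norm h"
      proof (intro ballI allI)
        fix x h assume x: "x \<in> \<Omega>"
        have "norm (y' x h) = norm (matrix (y' x) *v h)" using mwx[OF x] by simp
        also have "\<dots> \<le> norm (matrix (y' x)) * norm h" by (rule mat_vec_norm_le)
        also have "\<dots> \<le> M1 * norm h" using nb x by (simp add: mult_right_mono)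
        finally show "norm (y' x h) \<le> M1 * norm h" .
      qed
      show "0 \<le> M1" using M1 by simp
      show "p ` {0..1} \<subseteq> \<Omega>" using p(3) by blast
      show "\<forall>s\<in>{0..1}. \<forall>t\<in>{0..1}. norm (p s - p t) \<le> \<Lambda> * norm (x2 - x1) * \<bar>s - t\<bar>" using p(4) .
    qed
    then show ?thesis using p by simp
  qed
  have lower: "m / 2 * norm (x2 - x1) \<le> norm (y x2 - y x1)" if xx: "x1 \<in> U" "x2 \<in> U" for x1 x2
  proof -
    obtain p where p: "p 0 = x1" "p 1 = x2" "p ` {0..1} \<subseteq> \<Omega> \<inter> ball x1 r"
      "\<forall>s\<in>{0..1}. \<forall>t\<in>{0..1}. norm (p s - p t) \<le> \<Lambda> * norm (x2 - x1) * \<bar>s - t\<bar>"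
      using path[OF xx] by blast
    have x1O: "x1 \<in> \<Omega>" using UO xx(1) .
    define A where "A = matrix (y' x1)"
    define S where "S = \<Omega> \<inter> ball x1 r"
    have "norm ((\<lambda>x. y x - A *v x) (p 1) - (\<lambda>x. y x - A *v x) (p 0)) \<le> (M2 * r powr \<alpha>) * (\<Lambda> * norm (x2 - x1))"
    proof (rule path_bound[where f = "\<lambda>x. y x - A *v x" and f' = "\<lambda>x h. y' x h - A *v h" and S = S])
      show "open S" by (simp add: S_def op open_Int)
      show "\<forall>x\<in>S. ((\<lambda>x. y x - A *v x) has_derivative (\<lambda>h. y' x h - A *v h)) (at x)"
      proof
        fix x assume "x \<in> S"
        then have "x \<in> \<Omega>" by (simp add: S_def)
        then have "(y has_derivative y' x) (at x)" using der by blast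
        moreover have "((\<lambda>x. A *v x) has_derivative (\<lambda>h. A *v h)) (at x)"
          by (rule bounded_linear_imp_has_derivative) simp
        ultimately show "((\<lambda>x. y x - A *v x) has_derivative (\<lambda>h. y' x h - A *v h)) (at x)"
          by (rule has_derivative_diff)
      qed
      show "\<forall>x\<in>S. \<forall>h. norm (y' x h - A *v h) \<le> (M2 * r powr \<alpha>) * norm h"
      proof (intro ballI allI)
        fix x h assume "x \<in> S"
        then have x: "x \<in> \<Omega>" "dist x1 x < r" by (auto simp: S_def)
        have "y' x h - A *v h = (matrix (y' x) - A) *v h"
          using mwx[OF x(1)] by (simp add: matrix_vector_mult_diff_rdistrib)
        then have "norm (y' x h - A *v h) \<le> norm (matrix (y' x) - A) * norm h"
          using mat_vec_norm_le by metis
        also have "\<dots> \<le> (M2 * dist x x1 powr \<alpha>) * norm h"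
          using holder[OF x(1) x1O] by (simp add: A_def mult_right_mono)
        also have "\<dots> \<le> (M2 * r powr \<alpha>) * norm h"
        proof -
          have "dist x x1 powr \<alpha> \<le> r powr \<alpha>"
            using x(2) \<alpha> by (intro powr_mono2) (auto simp: dist_commute)
          then show ?thesis using M2 by (simp add: mult_right_mono)
        qed
        finally show "norm (y' x h - A *v h) \<le> (M2 * r powr \<alpha>) * norm h" .
      qed
      show "0 \<le> M2 * r powr \<alpha>" using M2 by simp
      show "p ` {0..1} \<subseteq> S" using p(3) by (simp add: S_def)
      show "\<forall>s\<in>{0..1}. \<forall>t\<in>{0..1}. norm (p s - p t) \<le> \<Lambda> * norm (x2 - x1) * \<bar>s - t\<bar>" using p(4) .
    qed
    also have "(M2 * r powr \<alpha>) * (\<Lambda> * norm (x2 - x1)) = (M2 * r powr \<alpha> * \<Lambda>) * norm (x2 - x1)"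
      by (simp add: algebra_simps)
    also have "\<dots> \<le> m / 2 * norm (x2 - x1)" using keyr by (rule mult_right_mono) simp
    finally have phi: "norm ((y x2 - y x1) - A *v (x2 - x1)) \<le> m / 2 * norm (x2 - x1)"
      using p(1,2) by (simp add: matrix_vector_mult_diff_distrib algebra_simps)
    have Aw: "m * norm (x2 - x1) \<le> norm (A *v (x2 - x1))"
      using det_lower[of A M1 \<delta> "x2 - x1"] nb detb x1O \<delta> M1 by (simp add: A_def m_def)
    have "norm (A *v (x2 - x1)) \<le> norm (y x2 - y x1) + norm ((y x2 - y x1) - A *v (x2 - x1))"
      using norm_triangle_ineq4[of "y x2 - y x1" "(y x2 - y x1) - A *v (x2 - x1)"] by simp
    then show ?thesis using phi Aw by linarith
  qed
  have inj: "inj_on y U"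
  proof (rule inj_onI)
    fix x1 x2 assume x: "x1 \<in> U" "x2 \<in> U" "y x1 = y x2"
    have "m / 2 * norm (x2 - x1) \<le> 0" using lower[OF x(1,2)] x(3) by simp
    then have "norm (x2 - x1) \<le> 0" using m by (simp add: mult_le_0_iff)
    then show "x1 = x2" by simp
  qed
  have bounds: "\<forall>x1\<in>U. \<forall>x2\<in>U.
               (1/2) * (\<delta> / M1 ^ (CARD('n) - 1)) * norm (x1 - x2) \<le> norm (y x1 - y x2) \<and>
               norm (y x1 - y x2) \<le> M1 * sqrt (1 + L^2) * norm (x1 - x2)"
  proof (intro ballI conjI)
    fix x1 x2 assume x: "x1 \<in> U" "x2 \<in> U"
    show "(1/2) * (\<delta> / M1 ^ (CARD('n) - 1)) * norm (x1 - x2) \<le> norm (y x1 - y x2)"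
      using lower[OF x(2,1)] by (simp add: m_def)
    show "norm (y x1 - y x2) \<le> M1 * sqrt (1 + L^2) * norm (x1 - x2)"
      using upper[OF x(2,1)] by (simp add: \<Lambda>_def mult.assoc)
  qed
  define G where "G = the_inv_into U y"
  have GI: "G (y x) = x" if "x \<in> U" for x using the_inv_into_f_f[OF inj that] by (simp add: G_def)
  define Bi where "Bi x = matrix_inv (matrix (y' x))" for x
  define G' where "G' v = (\<lambda>h. Bi (G v) *v h)" for v
  have detnz: "det (matrix (y' x)) \<noteq> 0" if "x \<in> \<Omega>" for x using detb that \<delta> by force
  have openU: "open U" by (simp add: U_def op open_Int)
  have contU: "continuous_on U y"
    by (rule continuous_at_imp_continuous_on) (use der UO in \<open>blast intro: has_derivative_continuous\<close>)
  have Gder: "(G has_derivative G' v) (at v)" if vv: "v \<in> y ` U" for v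
  proof -
    obtain x where x: "x \<in> U" "v = y x" using vv by blast
    have xO: "x \<in> \<Omega>" using UO x(1) .
    have idc: "y' x \<circ> G' v = id"
    proof
      fix h
      have "(y' x \<circ> G' v) h = matrix (y' x) *v (Bi x *v h)"
        using mwx[OF xO] by (simp add: G'_def x GI)
      also have "\<dots> = (matrix (y' x) ** Bi x) *v h" by (rule matrix_vector_mul_assoc)
      also have "\<dots> = h" using minv(1)[OF detnz[OF xO]] by (simp add: Bi_def)
      finally show "(y' x \<circ> G' v) h = id h" by simp
    qed
    have "(G has_derivative G' v) (at (y x))"
      by (rule has_derivative_inverse_strong[OF openU x(1) contU GI _ idc]) (use der xO in auto)
    then show ?thesis using x by simp
  qed
  have Bib: "norm (Bi x *v z) \<le> (1 / m) * norm z" if xO: "x \<in> \<Omega>" for x z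
  proof -
    have "norm (Bi x *v z) \<le> norm z / m"
      unfolding Bi_def m_def by (rule inv_bound) (use nb detb xO \<delta> M1 in auto)
    moreover have "norm z / m = (1 / m) * norm z" by simp
    ultimately show ?thesis by linarith
  qed
  have nBi: "norm (Bi x) \<le> sqrt (CARD('n)) * (1 / m)" if "x \<in> \<Omega>" for x
    by (rule norm_matrix_bound_op) (rule Bib[OF that])
  have holdBi: "norm (Bi x1 - Bi x2) \<le> (sqrt (CARD('n)) * (1/m) * (1/m) * M2 * (2/m) powr \<alpha>) * dist (y x1) (y x2) powr \<alpha>"
    if x: "x1 \<in> U" "x2 \<in> U" for x1 x2
  proof -
    have xO: "x1 \<in> \<Omega>" "x2 \<in> \<Omega>" using UO x by auto
    define D where "D = matrix (y' x2) - matrix (y' x1)"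
    have eq: "Bi x1 - Bi x2 = Bi x1 ** D ** Bi x2"
      unfolding Bi_def D_def by (rule inv_diff) (use detnz xO in auto)
    have this_z: "norm ((Bi x1 ** D ** Bi x2) *v z) \<le> ((1/m) * norm D * (1/m)) * norm z" for z
    proof -
      have "(Bi x1 ** D ** Bi x2) *v z = Bi x1 *v (D *v (Bi x2 *v z))"
        by (simp add: matrix_vector_mul_assoc matrix_mul_assoc)
      then have "norm ((Bi x1 ** D ** Bi x2) *v z) \<le> (1/m) * norm (D *v (Bi x2 *v z))"
        using Bib[OF xO(1)] by simp
      also have "\<dots> \<le> (1/m) * (norm D * norm (Bi x2 *v z))"
        using mult_left_mono[OF mat_vec_norm_le[of D "Bi x2 *v z"], of "1/m"] m by simp
      also have "\<dots> \<le> (1/m) * (norm D * ((1/m) * norm z))"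
        using mult_left_mono[OF mult_left_mono[OF Bib[OF xO(2), of z], of "norm D"], of "1/m"] m by simp
      finally show ?thesis by (simp add: algebra_simps)
    qed
    have mono: "\<And>X Y. X \<le> Y \<Longrightarrow> sqrt (CARD('n)) * ((1/m) * X * (1/m)) \<le> sqrt (CARD('n)) * ((1/m) * Y * (1/m))"
      by (intro mult_left_mono mult_right_mono) (use m in auto)
    from this_z have "norm (Bi x1 - Bi x2) \<le> sqrt (CARD('n)) * ((1/m) * norm D * (1/m))"
      unfolding eq by (rule norm_matrix_bound_op)
    also have "norm D \<le> M2 * dist x2 x1 powr \<alpha>" unfolding D_def by (rule holder[OF xO(2,1)])
    then have "sqrt (CARD('n)) * ((1/m) * norm D * (1/m)) \<le> sqrt (CARD('n)) * ((1/m) * (M2 * dist x2 x1 powr \<alpha>) * (1/m))"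
      by (rule mono)
    also have pw: "dist x2 x1 powr \<alpha> \<le> ((2/m) * dist (y x1) (y x2)) powr \<alpha>"
    proof (rule powr_mono2)
      show "dist x2 x1 \<le> 2/m * dist (y x1) (y x2)"
        using lower[OF x] m by (simp add: dist_norm norm_minus_commute field_simps)
    qed (use \<alpha> in auto)
    have "sqrt (CARD('n)) * ((1/m) * (M2 * dist x2 x1 powr \<alpha>) * (1/m)) \<le>
        sqrt (CARD('n)) * ((1/m) * (M2 * (((2/m) * dist (y x1) (y x2)) powr \<alpha>)) * (1/m))"
      using M2 by (intro mono mult_left_mono pw) simp
    also have "\<dots> = (sqrt (CARD('n)) * (1/m) * (1/m) * M2 * (2/m) powr \<alpha>) * dist (y x1) (y x2) powr \<alpha>"
    proof -
      have "((2/m) * dist (y x1) (y x2)) powr \<alpha> = (2/m) powr \<alpha> * dist (y x1) (y x2) powr \<alpha>"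
        by (rule powr_mult)
      then show ?thesis by (simp only:) (simp add: algebra_simps)
    qed
    finally show ?thesis .
  qed
  have C1: "C1_alpha (y ` U) G \<alpha>"
    unfolding C1_alpha_def
  proof (intro exI conjI)
    show "\<forall>v\<in>y ` U. (G has_derivative G' v) (at v)" using Gder by blast
    show "holder_norm_le (y ` U) (\<lambda>v. matrix (G' v)) \<alpha>
       (sqrt (CARD('n)) * (1 / m) + sqrt (CARD('n)) * (1/m) * (1/m) * M2 * (2/m) powr \<alpha>)"
      unfolding holder_norm_le_def
    proof (intro exI conjI)
      show "\<forall>v\<in>y ` U. norm (matrix (G' v)) \<le> sqrt (CARD('n)) * (1 / m)"
        using nBi UO by (auto simp: G'_def GI)
      show "\<forall>v\<in>y ` U. \<forall>w\<in>y ` U. norm (matrix (G' v) - matrix (G' w))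
          \<le> (sqrt (CARD('n)) * (1/m) * (1/m) * M2 * (2/m) powr \<alpha>) * dist v w powr \<alpha>"
        using holdBi by (auto simp: G'_def GI)
    qed simp
  qed
  show ?thesis using inj bounds C1 by (simp add: U_def G_def)
qed

theorem lemma3p6:
  fixes \<Omega> :: "(real^'n) set" and L \<alpha> \<delta> M1 M2 :: real
  assumes "lipschitz_domain_bound \<Omega> L" and "L > 0"
    and "0 < \<alpha>" and "\<alpha> \<le> 1" and "\<delta> > 0" and "M1 > 0" and "M2 > 0"
  shows "\<exists>\<rho>>0. \<forall>(y :: real^'n \<Rightarrow> real^'n) y'.
     ((\<forall>x\<in>\<Omega>. (y has_derivative y' x) (at x)) \<and>
      (\<forall>x\<in>\<Omega>. det (matrix (y' x)) \<ge> \<delta>) \<and>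
      (\<forall>x\<in>\<Omega>. norm (matrix (y' x)) \<le> M1) \<and>
      holder_norm_le \<Omega> (\<lambda>x. matrix (y' x)) \<alpha> M2)
     \<longrightarrow> (\<forall>xb\<in>closure \<Omega>.
            inj_on y (ball xb \<rho> \<inter> \<Omega>) \<and>
            (\<forall>x1\<in>ball xb \<rho> \<inter> \<Omega>. \<forall>x2\<in>ball xb \<rho> \<inter> \<Omega>.
               (1/2) * (\<delta> / M1 ^ (CARD('n) - 1)) * norm (x1 - x2) \<le> norm (y x1 - y x2) \<and>
               norm (y x1 - y x2) \<le> M1 * sqrt (1 + L^2) * norm (x1 - x2)) \<and>
            C1_alpha (y ` (ball xb \<rho> \<inter> \<Omega>)) (the_inv_into (ball xb \<rho> \<inter> \<Omega>) y) \<alpha>)"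
proof -
  have op: "open \<Omega>" using assms(1) unfolding lipschitz_domain_bound_def by blast
  obtain R0 where R0: "0 < R0"
    and chart: "\<forall>x0\<in>frontier \<Omega>.
        \<exists>(Q :: real^'n \<Rightarrow> real^'n) (k :: 'n) (a :: real^'n) (b :: real^'n) (g :: real^'n \<Rightarrow> real).
          orthogonal_transformation Q \<and>
          ball x0 R0 \<subseteq> {x. Q (x - x0) \<in> box a b} \<and>
          (\<forall>u v. (\<forall>i. i \<noteq> k \<longrightarrow> u$i = v$i) \<longrightarrow> g u = g v) \<and>
          lipschitz_on L UNIV g \<and>
          \<Omega> \<inter> {x. Q (x - x0) \<in> box a b} =
            {x. Q (x - x0) \<in> box a b \<and> (Q (x - x0))$k < g (Q (x - x0))}"
    using assms(1) unfolding lipschitz_domain_bound_def by blast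
  have L: "0 \<le> L" using assms(2) by simp
  define m where "m = \<delta> / M1^(CARD('n)-1)"
  define \<Lambda> where "\<Lambda> = sqrt (1 + L^2)"
  define c where "c = m / (2*M2*\<Lambda>)"
  define r0 where "r0 = min R0 (c powr (1/\<alpha>))"
  define \<rho> where "\<rho> = r0 / (9 + 2*L)"
  have m: "0 < m" using assms(5,6) by (simp add: m_def)
  have \<Lambda>: "0 < \<Lambda>" by (simp add: \<Lambda>_def add_pos_nonneg)
  have c: "0 < c" using m \<Lambda> assms(7) by (simp add: c_def)
  have r0: "0 < r0" using R0 c by (simp add: r0_def)
  have L9: "0 < 9 + 2*L" using L by simp
  have r0eq: "(9 + 2*L)*\<rho> = r0" using L9 by (simp add: \<rho>_def)
  have \<rho>: "0 < \<rho>" "(9 + 2*L)*\<rho> \<le> R0"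
    using r0 L9 by (simp_all add: \<rho>_def r0eq r0_def)
  have "r0 powr \<alpha> \<le> (c powr (1/\<alpha>)) powr \<alpha>"
    by (rule powr_mono2) (use assms(3) r0 in \<open>auto simp: r0_def\<close>)
  also have "\<dots> = c" using assms(3) c by (simp add: powr_powr)
  finally have rc: "r0 powr \<alpha> \<le> c" .
  have "M2 * r0 powr \<alpha> * \<Lambda> \<le> M2 * c * \<Lambda>"
    using rc assms(7) \<Lambda> by (simp add: mult_left_mono mult_right_mono)
  also have "\<dots> = m / 2" using assms(7) \<Lambda> by (simp add: c_def)
  finally have key: "M2 * ((9 + 2*L)*\<rho>) powr \<alpha> * sqrt (1 + L^2) \<le> \<delta> / M1^(CARD('n)-1) / 2"
    by (simp add: r0eq \<Lambda>_def m_def)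
  show ?thesis
    apply (rule exI[of _ \<rho>])
    apply (rule conjI)
     apply (rule \<rho>(1))
    apply (intro allI impI ballI)
    apply (elim conjE)
    apply (rule main_fixed[OF op R0 chart L assms(3) assms(5) assms(6) assms(7) \<rho> key])
        apply assumption+
    done
qed

end
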